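(* Let $a,b$ be independent indeterminates over $\mathbb Q$ and $\mathbb Q_{a,b}:=\mathbb Q(a,b)$. The point $P_0=(-4db,\,4d^2)$ lies on $E_{a,b}$ and has infinite order in the Mordell–Weil group $E_{a,b}(\mathbb Q_{a,b})$.
   Context: $d=d(a,b):=-4b^3+(a^2-30a+1)b^2+2a(3a+1)(4a-7)b-a(4a^4-4a^3-40a^2+91a-4)$. $E_{a,b}$ is the elliptic curve over $\mathbb Q(a,b)$ given by $y^2=x^3+d(a^2-30a+1)x^2-8d^2a(3a+1)(4a-7)x-16d^3a(4a^4-4a^3-40a^2+91a-4)$. *)

theory Defs
  imports "HOL-Computational_Algebra.Polynomial" "HOL-Computational_Algebra.Fraction_Field"
begin

text \<open>The field Q(a,b) of rational functions in two independent indeterminates,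
  realised as the fraction field of Q[b][a] = rat poly poly.\<close>
type_synonym Qab = "rat poly poly fract"

definition var_a :: Qab where "var_a = Fract (monom 1 1) 1"
definition var_b :: Qab where "var_b = Fract [:monom 1 1:] 1"

datatype 'f ecpoint = Infinity | Pt 'f 'f

definition on_curve :: "'f::field \<Rightarrow> 'f \<Rightarrow> 'f \<Rightarrow> 'f ecpoint \<Rightarrow> bool" where
  "on_curve A B C P = (case P of Infinity \<Rightarrow> True
     | Pt x y \<Rightarrow> y^2 = x^3 + A * x^2 + B * x + C)"

text \<open>Standard chord-and-tangent group law (a1 = a3 = 0, a2 = A, a4 = B, a6 = C).\<close>
fun ec_add :: "'f::field \<Rightarrow> 'f \<Rightarrow> 'f \<Rightarrow> 'f ecpoint \<Rightarrow> 'f ecpoint \<Rightarrow> 'f ecpoint" where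
  "ec_add A B C Infinity Q = Q"
| "ec_add A B C P Infinity = P"
| "ec_add A B C (Pt x1 y1) (Pt x2 y2) =
     (if x1 = x2 \<and> y1 = - y2 then Infinity
      else let l = (if x1 = x2 then (3 * x1^2 + 2 * A * x1 + B) / (2 * y1)
                    else (y2 - y1) / (x2 - x1));
               x3 = l^2 - A - x1 - x2
           in Pt x3 (- (l * (x3 - x1) + y1)))"

fun ec_mult :: "'f::field \<Rightarrow> 'f \<Rightarrow> 'f \<Rightarrow> nat \<Rightarrow> 'f ecpoint \<Rightarrow> 'f ecpoint" where
  "ec_mult A B C 0 P = Infinity"
| "ec_mult A B C (Suc n) P = ec_add A B C P (ec_mult A B C n P)"

definition dd :: "'f::field \<Rightarrow> 'f \<Rightarrow> 'f" where
  "dd a b = -4 * b^3 + (a^2 - 30*a + 1) * b^2 + 2*a*(3*a+1)*(4*a-7)*b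
            - a*(4*a^4 - 4*a^3 - 40*a^2 + 91*a - 4)"

definition EA :: "'f::field \<Rightarrow> 'f \<Rightarrow> 'f" where
  "EA a b = dd a b * (a^2 - 30*a + 1)"
definition EB :: "'f::field \<Rightarrow> 'f \<Rightarrow> 'f" where
  "EB a b = - 8 * (dd a b)^2 * a * (3*a+1) * (4*a-7)"
definition EC :: "'f::field \<Rightarrow> 'f \<Rightarrow> 'f" where
  "EC a b = - 16 * (dd a b)^3 * a * (4*a^4 - 4*a^3 - 40*a^2 + 91*a - 4)"

end

theory Submission
  imports Defs
begin

lemma map_poly_add_hom:
  assumes "f 0 = 0" "\<And>x y. f (x + y) = f x + f y"
  shows "map_poly f (p + q) = map_poly f p + map_poly f q"
  by (intro poly_eqI) (simp add: assms coeff_map_poly)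

lemma map_poly_mult_hom:
  fixes f :: "'a::comm_ring_1 \<Rightarrow> 'b::comm_ring_1"
  assumes "f 0 = 0" "\<And>x y. f (x + y) = f x + f y" "\<And>x y. f (x * y) = f x * f y"
  shows "map_poly f (p * q) = map_poly f p * map_poly f q"
proof (induction p)
  case 0 then show ?case by simp
next
  case (pCons a p)
  have "map_poly f (pCons a p * q) = map_poly f (smult a q + pCons 0 (p * q))"
    by (simp add: mult_pCons_left)
  also have "\<dots> = smult (f a) (map_poly f q) + pCons 0 (map_poly f p * map_poly f q)"
    by (simp add: map_poly_add_hom[of f, OF assms(1,2)] map_poly_smult[of f, OF assms(1,3)] map_poly_pCons[of f, OF assms(1)] pCons.IH assms(1))
  also have "\<dots> = map_poly f (pCons a p) * map_poly f q"
    by (simp add: map_poly_pCons[of f, OF assms(1)] mult_pCons_left)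
  finally show ?case .
qed

definition K :: "rat poly \<Rightarrow> rat poly poly" where "K c = map_poly (\<lambda>r. [:r:]) c"
definition A0 :: "rat poly poly" where "A0 = [:[:0,1:]:]"
definition swp :: "rat poly poly \<Rightarrow> rat poly poly" where
  "swp p = poly (map_poly K p) A0"

lemma K_add: "K (x + y) = K x + K y"
  unfolding K_def by (rule map_poly_add_hom) auto
lemma K_mult: "K (x * y) = K x * K y"
  unfolding K_def by (rule map_poly_mult_hom) auto
lemma K_0: "K 0 = 0" by (simp add: K_def)

lemma swp_add: "swp (p + q) = swp p + swp q"
  unfolding swp_def by (simp add: map_poly_add_hom K_0 K_add)
lemma swp_mult: "swp (p * q) = swp p * swp q"
  unfolding swp_def by (simp add: map_poly_mult_hom K_0 K_add K_mult)
lemma swp_pCons: "swp (pCons c p) = K c + A0 * swp p"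
  unfolding swp_def by (simp add: map_poly_pCons K_0)
lemma swp_const: "swp [:c:] = K c"
  using swp_pCons[of c 0] by (simp add: swp_def)
lemma K_pCons: "K (pCons r c) = pCons [:r:] (K c)"
  unfolding K_def by (simp add: map_poly_pCons)
lemma swp_K: "swp (K c) = [:c:]"
proof (induction c)
  case 0 then show ?case by (simp add: swp_def K_def)
next
  case (pCons r c)
  have "swp (K (pCons r c)) = K [:r:] + A0 * [:c:]"
    by (simp add: K_pCons swp_pCons pCons.IH)
  also have "\<dots> = [:pCons r c:]"
    by (simp add: K_def A0_def map_poly_pCons)
  finally show ?case .
qed
lemma swp_A0: "swp A0 = [:0,1:]"
  by (simp add: A0_def swp_const K_def map_poly_pCons)

lemma swp_swp: "swp (swp p) = p"
proof (induction p)
  case 0 then show ?case by (simp add: swp_def)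
next
  case (pCons c p)
  show ?case by (simp add: swp_pCons swp_add swp_mult swp_K swp_A0 pCons.IH)
qed

lemma swp_eq0: "swp p = 0 \<longleftrightarrow> p = 0"
  by (metis swp_swp swp_def map_poly_0 poly_0)


lemma swp_1: "swp 1 = 1"
  using swp_const[of 1] by (simp add: K_def one_pCons[symmetric])

definition vbp :: "rat poly poly \<Rightarrow> int" where "vbp p = int (degree (swp p))"

lemma vbp_mult: "p \<noteq> 0 \<Longrightarrow> q \<noteq> 0 \<Longrightarrow> vbp (p * q) = vbp p + vbp q"
  by (simp add: vbp_def swp_mult degree_mult_eq swp_eq0)

lemma vbp_add: "p + q \<noteq> 0 \<Longrightarrow> vbp (p + q) \<le> max (vbp p) (vbp q)"
  unfolding vbp_def swp_add using degree_add_le[of "swp p" "max (degree (swp p)) (degree (swp q))" "swp q"]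
  by auto

lift_definition vb :: "Qab \<Rightarrow> int" is "\<lambda>x. if fst x = 0 then 0 else vbp (fst x) - vbp (snd x)"
proof -
  fix x y :: "rat poly poly \<times> rat poly poly"
  assume "fractrel x y"
  then obtain a b c d where xy: "x = (a,b)" "y = (c,d)" "b \<noteq> 0" "d \<noteq> 0" "a * d = c * b"
    by (cases x, cases y) auto
  show "(if fst x = 0 then 0 else vbp (fst x) - vbp (snd x)) =
        (if fst y = 0 then 0 else vbp (fst y) - vbp (snd y))"
  proof (cases "a = 0")
    case True then show ?thesis using xy by auto
  next
    case False
    then have "c \<noteq> 0" using xy by auto
    have "vbp a + vbp d = vbp c + vbp b" using xy vbp_mult[of a d] vbp_mult[of c b] False \<open>c\<noteq>0\<close> by metis
    then show ?thesis using xy False \<open>c\<noteq>0\<close> by auto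
  qed
qed

lemma vb_Fract: "q \<noteq> 0 \<Longrightarrow> vb (Fract p q) = (if p = 0 then 0 else vbp p - vbp q)"
  by transfer simp

lemma vb_mult:
  assumes "z \<noteq> 0" "w \<noteq> 0" shows "vb (z * w) = vb z + vb w"
proof -
  obtain p q where z: "z = Fract p q" "q \<noteq> 0" by (cases z)
  obtain r s where w: "w = Fract r s" "s \<noteq> 0" by (cases w)
  have "p \<noteq> 0" using assms z by (auto simp: fract_collapse)
  have "r \<noteq> 0" using assms w by (auto simp: fract_collapse)
  show ?thesis using z w \<open>p\<noteq>0\<close> \<open>r\<noteq>0\<close>
    by (simp add: vb_Fract vbp_mult)
qed

lemma vb_inverse:
  assumes "z \<noteq> 0" shows "vb (inverse z) = - vb z"
proof -
  obtain p q where z: "z = Fract p q" "q \<noteq> 0" by (cases z)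
  have "p \<noteq> 0" using assms z by (auto simp: fract_collapse)
  show ?thesis using z \<open>p\<noteq>0\<close> by (simp add: vb_Fract)
qed

lemma vb_add:
  assumes "z \<noteq> 0" "w \<noteq> 0" "z + w \<noteq> 0" shows "vb (z + w) \<le> max (vb z) (vb w)"
proof -
  obtain p q where z: "z = Fract p q" "q \<noteq> 0" by (cases z)
  obtain r s where w: "w = Fract r s" "s \<noteq> 0" by (cases w)
  have "p \<noteq> 0" using assms z by (auto simp: fract_collapse)
  have "r \<noteq> 0" using assms w by (auto simp: fract_collapse)
  have n: "p * s + r * q \<noteq> 0" using assms z w by (auto simp: fract_collapse)
  have "vb (z + w) = vbp (p * s + r * q) - vbp (q * s)" using z w n by (simp add: vb_Fract)
  also have "\<dots> \<le> max (vbp (p*s)) (vbp (r*q)) - vbp (q*s)" using vbp_add[OF n] by simp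
  also have "\<dots> = max (vb z) (vb w)"
    using z w \<open>p\<noteq>0\<close> \<open>r\<noteq>0\<close> by (simp add: vb_Fract vbp_mult)
  finally show ?thesis .
qed


definition R :: "rat \<Rightarrow> Qab" where "R r = Fract [:[:r:]:] 1"

lemma R_add: "R (x + y) = R x + R y" by (simp add: R_def)
lemma R_mult: "R (x * y) = R x * R y" by (simp add: R_def)
lemma R_1: "R 1 = 1"
proof -
  have "[:[:1::rat:]:] = 1" by (simp add: one_pCons)
  then show ?thesis by (simp add: R_def fract_collapse)
qed
lemma R_0: "R 0 = 0" by (simp add: R_def fract_collapse)
lemma R_uminus: "R (- x) = - R x" by (simp add: R_def)
lemma R_diff: "R (x - y) = R x - R y" by (simp add: R_def)
lemma R_eq0: "R x = 0 \<longleftrightarrow> x = 0"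
  by (simp add: R_def Zero_fract_def eq_fract(1))
lemma R_of_nat: "R (of_nat n) = of_nat n"
  by (induction n) (simp_all add: R_0 R_add R_1)
lemma R_numeral: "R (numeral n) = numeral n"
  using R_of_nat[of "numeral n"] by simp
lemma R_divide: "y \<noteq> 0 \<Longrightarrow> R (x / y) = R x / R y"
  by (metis R_eq0 R_mult nonzero_eq_divide_eq)
lemma R_power: "R (x ^ n) = R x ^ n"
  by (induction n) (simp_all add: R_1 R_mult)

lemma vb_R: "r \<noteq> 0 \<Longrightarrow> vb (R r) = 0"
  by (simp add: R_def vb_Fract vbp_def swp_const K_def swp_1 map_poly_pCons)

lemma vb_1: "vb 1 = 0" using vb_R[of 1] by (simp add: R_1)

lemma vb_b: "vb var_b = 1"
  by (simp add: var_b_def vb_Fract vbp_def swp_const K_def monom_altdef map_poly_pCons swp_1)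

lemma var_b_nz: "var_b \<noteq> 0"
  by (simp add: var_b_def Zero_fract_def eq_fract(1))

lemma vb_a: "vb var_a = 0"
  by (simp add: var_a_def vb_Fract vbp_def swp_def monom_altdef map_poly_pCons K_def A0_def swp_1[unfolded swp_def])

lemma var_a_nz: "var_a \<noteq> 0"
  by (simp add: var_a_def Zero_fract_def eq_fract(1))

lemma vb_uminus: "vb (- z) = vb z"
proof (cases "z = 0")
  case False
  have "-z = R (-1) * z" by (simp add: R_uminus R_1)
  then show ?thesis using vb_mult[of "R (-1)" z] False vb_R[of "-1"] R_eq0[of "-1"] by simp
qed simp

lemma vb_power: "z \<noteq> 0 \<Longrightarrow> vb (z ^ n) = int n * vb z"
  by (induction n) (simp_all add: R_1[symmetric] vb_R vb_mult algebra_simps)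

definition lo :: "int \<Rightarrow> Qab \<Rightarrow> bool" where "lo k z \<longleftrightarrow> z = 0 \<or> vb z \<le> k"

lemma lo_0[simp]: "lo k 0" by (simp add: lo_def)
lemma lo_mono: "lo j z \<Longrightarrow> j \<le> k \<Longrightarrow> lo k z" by (auto simp: lo_def)
lemma lo_add: "lo k z \<Longrightarrow> lo k w \<Longrightarrow> lo k (z + w)"
  unfolding lo_def using vb_add[of z w] by fastforce
lemma lo_uminus: "lo k z \<Longrightarrow> lo k (- z)" by (simp add: lo_def vb_uminus)
lemma lo_diff: "lo k z \<Longrightarrow> lo k w \<Longrightarrow> lo k (z - w)"
  using lo_add[of k z "-w"] lo_uminus[of k w] by simp
lemma lo_mult: "lo j z \<Longrightarrow> lo k w \<Longrightarrow> lo (j + k) (z * w)"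
  unfolding lo_def using vb_mult[of z w] by (cases "z = 0"; cases "w = 0") auto
lemma lo_mult': "lo j z \<Longrightarrow> lo k w \<Longrightarrow> j + k \<le> m \<Longrightarrow> lo m (z * w)"
  using lo_mult lo_mono by blast
lemma lo_power: "lo k z \<Longrightarrow> lo (int n * k) (z ^ n)"
  unfolding lo_def using vb_power[of z n]
  by (cases "z = 0"; cases n) (auto simp: mult_left_mono vb_1)
lemma lo_R: "lo 0 (R r)" by (cases "r = 0") (auto simp: lo_def vb_R R_0)
lemma lo_numeral: "lo 0 (numeral n)" using lo_R[of "numeral n"] by (simp add: R_numeral)
lemma lo_1: "lo 0 1" using lo_R[of 1] by (simp add: R_1)
lemma lo_a: "lo 0 var_a" by (simp add: lo_def vb_a)
lemma lo_b: "lo 1 var_b" by (simp add: lo_def vb_b)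
lemma lo0_add: "lo 0 z \<Longrightarrow> lo 0 w \<Longrightarrow> lo 0 (z + w)" by (rule lo_add)
lemma lo0_diff: "lo 0 z \<Longrightarrow> lo 0 w \<Longrightarrow> lo 0 (z - w)" by (rule lo_diff)
lemma lo0_mult: "lo 0 z \<Longrightarrow> lo 0 w \<Longrightarrow> lo 0 (z * w)" using lo_mult[of 0 z 0 w] by simp
lemma lo0_power: "lo 0 z \<Longrightarrow> lo 0 (z ^ n)" using lo_power[of 0 z n] by simp
lemma lo0_uminus: "lo 0 z \<Longrightarrow> lo 0 (- z)" by (rule lo_uminus)
lemmas lo0_intros = lo0_add lo0_diff lo0_mult lo0_power lo0_uminus lo_numeral lo_1 lo_a lo_R

lemma lo_bpow: "lo (int k) (var_b ^ k)" using lo_power[OF lo_b, of k] by simp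

lemma vb_bpow: "vb (R c * var_b ^ k) = int k" if "c \<noteq> 0"
  using that by (simp add: vb_mult vb_power vb_R vb_b R_eq0 var_b_nz)


definition ap :: "rat \<Rightarrow> nat \<Rightarrow> Qab \<Rightarrow> bool" where
  "ap c k z \<longleftrightarrow> lo (int k - 1) (z - R c * var_b ^ k)"

lemma lo_term: "lo (int k) (R c * var_b ^ k)"
  using lo_mult[OF lo_R[of c] lo_bpow[of k]] by simp

lemma ap_lo: "ap c k z \<Longrightarrow> lo (int k) z"
proof -
  assume "ap c k z"
  then have "lo (int k) (z - R c * var_b ^ k)" unfolding ap_def by (rule lo_mono) simp
  from lo_add[OF this lo_term[of k c]] show ?thesis by simp
qed

lemma ap_term: "ap c k (R c * var_b ^ k)" by (simp add: ap_def)

lemma ap_add: "ap c k z \<Longrightarrow> ap c' k w \<Longrightarrow> ap (c + c') k (z + w)"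
  unfolding ap_def using lo_add[of "int k - 1" "z - R c * var_b ^ k" "w - R c' * var_b ^ k"]
  by (simp add: R_add algebra_simps)

lemma ap_uminus: "ap c k z \<Longrightarrow> ap (- c) k (- z)"
  unfolding ap_def using lo_uminus[of "int k - 1" "z - R c * var_b ^ k"]
  by (simp add: R_uminus algebra_simps)

lemma ap_diff: "ap c k z \<Longrightarrow> ap c' k w \<Longrightarrow> ap (c - c') k (z - w)"
  using ap_add[of c k z "-c'" "-w"] ap_uminus[of c' k w] by simp

lemma ap_pert: "ap c k z \<Longrightarrow> lo (int k - 1) e \<Longrightarrow> ap c k (z + e)"
  unfolding ap_def using lo_add[of "int k - 1" "z - R c * var_b ^ k" e]
  by (simp add: algebra_simps)

lemma ap_pert': "ap c k z \<Longrightarrow> lo (int k - 1) e \<Longrightarrow> ap c k (z - e)"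
  using ap_pert[of c k z "-e"] lo_uminus[of _ e] by simp

lemma ap_mult: "ap c j z \<Longrightarrow> ap c' k w \<Longrightarrow> ap (c * c') (j + k) (z * w)"
proof -
  assume h1: "ap c j z" and h2: "ap c' k w"
  have e: "z * w - R (c * c') * var_b ^ (j + k) =
      (z - R c * var_b ^ j) * w + (R c * var_b ^ j) * (w - R c' * var_b ^ k)"
    by (simp add: R_mult power_add algebra_simps)
  have "lo (int j - 1 + int k) ((z - R c * var_b ^ j) * w)"
    using lo_mult[OF h1[unfolded ap_def] ap_lo[OF h2]] .
  moreover have "lo (int j + (int k - 1)) ((R c * var_b ^ j) * (w - R c' * var_b ^ k))"
    using lo_mult[OF lo_term h2[unfolded ap_def]] .
  ultimately show ?thesis unfolding ap_def e
    by (intro lo_add) (simp_all add: algebra_simps)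
qed

lemma ap_mult': "ap c j z \<Longrightarrow> ap c' k w \<Longrightarrow> c * c' = e \<Longrightarrow> j + k = m \<Longrightarrow> ap e m (z * w)"
  using ap_mult by blast

lemma ap_nz: assumes "ap c k z" "c \<noteq> 0" shows "z \<noteq> 0" "vb z = int k"
proof -
  have m: "vb (R c * var_b ^ k) = int k" "R c * var_b ^ k \<noteq> 0"
    using vb_bpow[OF assms(2)] assms(2) by (auto simp: R_eq0 var_b_nz)
  have "\<not> lo (int k - 1) z"
  proof
    assume "lo (int k - 1) z"
    from lo_diff[OF this assms(1)[unfolded ap_def]] have "lo (int k - 1) (R c * var_b ^ k)" by simp
    then show False using m by (simp add: lo_def)
  qed
  then show "z \<noteq> 0" "vb z = int k" using ap_lo[OF assms(1)] by (auto simp: lo_def)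
qed

lemma ap_uniq: assumes "ap c k z" "ap c' k z" shows "c = c'"
proof (rule ccontr)
  assume "c \<noteq> c'"
  have "ap (c - c') k 0" using ap_diff[OF assms] by simp
  then show False using ap_nz[of "c - c'" k 0] \<open>c \<noteq> c'\<close> by simp
qed

lemma ap_div:
  assumes "ap c j z" "ap c' k w" "c' \<noteq> 0" "k \<le> j" "c / c' = e" "j - k = m"
  shows "ap e m (z / w)"
proof -
  have w: "w \<noteq> 0" "vb w = int k" using ap_nz[OF assms(2,3)] by auto
  have "ap (e * c') (m + k) (R e * var_b ^ m * w)" by (rule ap_mult[OF ap_term assms(2)])
  moreover have "m + k = j" "e * c' = c" using assms by auto
  ultimately have "ap c j (R e * var_b ^ m * w)" by simp
  from ap_diff[OF assms(1) this] have num: "lo (int j - 1) (z - R e * var_b ^ m * w)"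
    by (simp add: ap_def R_0)
  have iw: "lo (- int k) (inverse w)" using w by (simp add: lo_def vb_inverse)
  have eq: "z / w - R e * var_b ^ m = (z - R e * var_b ^ m * w) * inverse w"
    using w by (simp add: field_simps)
  have "int j - 1 + - int k = int m - 1" using assms(4,6) by auto
  then show ?thesis unfolding ap_def eq using lo_mult[OF num iw] by (metis (no_types) diff_conv_add_uminus)
qed

lemma ap_num: "ap (numeral n) 0 (numeral n)"
  by (simp add: ap_def R_numeral)
lemma ap_neg_num: "ap (- numeral n) 0 (- numeral n)"
  by (simp add: ap_def R_numeral R_uminus)
lemma ap_b: "ap 1 1 var_b"
  by (simp add: ap_def R_1)
lemma ap_zero: "lo (int k - 1) e \<Longrightarrow> ap 0 k e"
  by (simp add: ap_def R_0)

lemma r_eq: fixes N M :: rat assumes "N \<ge> 2" "M = N + 1"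
  shows "(64/N^3 - 64)/(16/N^2 - 16) = 4*(N^2+N+1)/(N*M)"
proof -
  have h: "N \<noteq> 0" "N - 1 \<noteq> 0" "M \<noteq> 0" using assms by auto
  have e1: "16/N^2 - 16 = -16*(N-1)*M/N^2" using h assms(2) by (simp add: field_simps power2_eq_square)
  have e2: "64/N^3 - 64 = -64*(N-1)*(N^2+N+1)/N^3" using h by (simp add: field_simps power3_eq_cube power2_eq_square)
  have "(-64*(N-1)*(N^2+N+1)/N^3) / (-16*(N-1)*M/N^2) = 4*(N^2+N+1)/(N*M)"
    using h by (simp add: field_simps power2_eq_square power3_eq_cube)
  then show ?thesis unfolding e1 e2 .
qed
lemma E1: fixes N M :: rat assumes "N \<ge> 2" "M = N + 1"
  shows "(4*(N^2+N+1)/(N*M))^2 - 16 - 16/N^2 = 16/M^2"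
proof -
  have h: "N \<noteq> 0" "M \<noteq> 0" using assms by auto
  show ?thesis using h by (simp add: field_simps power2_eq_square assms(2)[symmetric]) (simp add: assms(2) algebra_simps)
qed
lemma E2: fixes N M :: rat assumes "N \<ge> 2" "M = N + 1"
  shows "-((4*(N^2+N+1)/(N*M)) * (16/M^2 - 16) + 64) = 64/M^3"
proof -
  have h: "N \<noteq> 0" "M \<noteq> 0" using assms by auto
  show ?thesis using h by (simp add: field_simps power2_eq_square power3_eq_cube) (simp add: assms(2) algebra_simps)
qed

lemma ap_sq: "ap c k z \<Longrightarrow> c^2 = e \<Longrightarrow> 2 * k = m \<Longrightarrow> ap e m (z^2)"
  using ap_mult[of c k z c k z] by (simp add: power2_eq_square mult_2)

lemma ap_neg: "ap c k z \<Longrightarrow> - c = e \<Longrightarrow> ap e k (- z)"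
  using ap_uminus by blast

lemma orbit:
  fixes A B C x0 y0 :: Qab
  assumes hx0: "ap 16 4 x0" and hy0: "ap 64 6 y0" and hA: "lo 3 A" and hB: "lo 6 B"
  shows "n \<ge> 1 \<Longrightarrow> \<exists>x y. ec_mult A B C n (Pt x0 y0) = Pt x y \<and>
           ap (16 / of_nat n ^ 2) 4 x \<and> ap (64 / of_nat n ^ 3) 6 y"
proof (induction n)
  case 0 then show ?case by simp
next
  case (Suc n)
  consider "n = 0" | "n = 1" | "n \<ge> 2" by linarith
  then show ?case
  proof cases
    case 1 then show ?thesis using hx0 hy0 by simp
  next
    case 2
    have yne: "\<not> y0 = - y0"
    proof
      assume "y0 = - y0"
      then have "ap (-64) 6 y0" using ap_uminus[OF hy0] by simp
      from ap_uniq[OF hy0 this] show False by simp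
    qed
    define l where "l = (3 * x0^2 + 2 * A * x0 + B) / (2 * y0)"
    define x3 where "x3 = l^2 - A - x0 - x0"
    define y3 where "y3 = - (l * (x3 - x0) + y0)"
    have t1: "ap 768 8 (3 * x0^2)"
      by (rule ap_mult'[OF ap_num ap_sq[OF hx0]]) simp_all
    have t2a: "lo 3 (2 * A)" by (rule lo_mult'[OF lo_numeral hA]) simp
    have t2: "lo 7 (2 * A * x0)"
      by (rule lo_mult'[OF t2a ap_lo[OF hx0]]) simp
    have t3: "lo 7 B" by (rule lo_mono[OF hB]) simp
    have num: "ap 768 8 (3 * x0^2 + 2 * A * x0 + B)"
      by (rule ap_pert[OF ap_pert[OF t1]]) (use t2 t3 in simp_all)
    have den: "ap 128 6 (2 * y0)"
      by (rule ap_mult'[OF ap_num hy0]) simp_all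
    have hl: "ap 6 2 l" unfolding l_def
      by (rule ap_div[OF num den]) simp_all
    have "ap 36 4 (l^2)" by (rule ap_sq[OF hl]) simp_all
    then have "ap 36 4 (l^2 - A)" by (rule ap_pert') (use hA in simp)
    then have "ap 20 4 (l^2 - A - x0)" using ap_diff[OF _ hx0] by fastforce
    then have hx3: "ap 4 4 x3" unfolding x3_def using ap_diff[OF _ hx0] by fastforce
    have "ap (-12) 4 (x3 - x0)" using ap_diff[OF hx3 hx0] by simp
    then have "ap (-72) 6 (l * (x3 - x0))" by (rule ap_mult'[OF hl]) simp_all
    then have "ap (-8) 6 (l * (x3 - x0) + y0)" using ap_add[OF _ hy0] by fastforce
    then have hy3: "ap 8 6 y3" unfolding y3_def by (rule ap_neg) simp
    have "ec_mult A B C (Suc n) (Pt x0 y0) = Pt x3 y3"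
      using 2 yne by (simp add: Let_def l_def x3_def y3_def)
    then show ?thesis using hx3 hy3 2 by simp
  next
    case 3
    then obtain x y where Q: "ec_mult A B C n (Pt x0 y0) = Pt x y"
      and hx: "ap (16 / of_nat n ^ 2) 4 x" and hy: "ap (64 / of_nat n ^ 3) 6 y"
      using Suc.IH by auto
    define N :: rat where "N = of_nat n"
    define M :: rat where "M = N + 1"
    have N2: "N \<ge> 2" using 3 by (simp add: N_def)
    have c1: "16 / N^2 - 16 \<noteq> 0"
    proof
      assume "16 / N^2 - 16 = 0"
      then have "N^2 = 1" using N2 by (simp add: field_simps)
      moreover have "N^2 \<ge> 2^2" by (rule power_mono) (use N2 in auto)
      ultimately show False by simp
    qed
    have xne: "x0 \<noteq> x"
    proof
      assume "x0 = x"
      then have "ap (16 / N^2) 4 x0" using hx by (simp only: N_def)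
      then have "16 = 16 / N^2" by (rule ap_uniq[OF hx0])
      then show False using c1 by simp
    qed
    define r where "r = 4*(N^2+N+1)/(N*M)"
    define l where "l = (y - y0) / (x - x0)"
    define x3 where "x3 = l^2 - A - x0 - x"
    define y3 where "y3 = - (l * (x3 - x0) + y0)"
    have hx': "ap (16 / N^2) 4 x" and hy': "ap (64 / N^3) 6 y" using hx hy by (simp_all add: N_def)
    have rr: "(64 / N^3 - 64) / (16 / N^2 - 16) = r" unfolding r_def by (rule r_eq[OF N2 M_def])
    have hl: "ap r 2 l" unfolding l_def
      by (rule ap_div[OF ap_diff[OF hy' hy0] ap_diff[OF hx' hx0] c1 _ rr]) simp_all
    have "ap (r^2) 4 (l^2)" by (rule ap_sq[OF hl]) simp_all
    then have "ap (r^2) 4 (l^2 - A)" by (rule ap_pert') (use hA in simp)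
    then have "ap (r^2 - 16) 4 (l^2 - A - x0)" by (rule ap_diff[OF _ hx0])
    then have p1: "ap (r^2 - 16 - 16/N^2) 4 x3" unfolding x3_def by (rule ap_diff[OF _ hx'])
    have e1: "r^2 - 16 - 16/N^2 = 16/M^2" unfolding r_def by (rule E1[OF N2 M_def])
    have hx3: "ap (16/M^2) 4 x3" using p1 unfolding e1 .
    have "ap (16/M^2 - 16) 4 (x3 - x0)" by (rule ap_diff[OF hx3 hx0])
    then have "ap (r * (16/M^2 - 16)) 6 (l * (x3 - x0))" by (rule ap_mult'[OF hl]) simp_all
    then have "ap (r * (16/M^2 - 16) + 64) 6 (l * (x3 - x0) + y0)" by (rule ap_add[OF _ hy0])
    moreover have e2: "- (r * (16/M^2 - 16) + 64) = 64/M^3" unfolding r_def by (rule E2[OF N2 M_def])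
    ultimately have hy3: "ap (64/M^3) 6 y3" unfolding y3_def by (rule ap_neg)
    have "ec_mult A B C (Suc n) (Pt x0 y0) = Pt x3 y3"
      using Q xne by (simp add: Let_def l_def x3_def y3_def)
    moreover have "of_nat (Suc n) = M" by (simp add: M_def N_def)
    ultimately show ?thesis using hx3 hy3 by blast
  qed
qed


lemma ap_bpow: "ap 1 k (var_b ^ k)" by (simp add: ap_def R_1)

lemma d_ap: "ap (-4) 3 (dd var_a var_b)"
proof -
  define a where "a = var_a"
  define b where "b = var_b"
  have eq: "dd a b = -4 * b^3 + ((a^2 - 30*a + 1) * b^2 + 2*a*(3*a+1)*(4*a-7)*b
            - a*(4*a^4 - 4*a^3 - 40*a^2 + 91*a - 4))"
    unfolding dd_def by (simp add: algebra_simps)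
  have t: "ap (-4) 3 (-4 * b^3)" unfolding b_def
    by (rule ap_mult'[OF ap_neg_num ap_bpow]) simp_all
  have p1: "lo 0 (a^2 - 30*a + 1)" unfolding a_def by (intro lo0_intros)
  have p2: "lo 0 (2*a*(3*a+1)*(4*a-7))" unfolding a_def by (intro lo0_intros)
  have p3: "lo 0 (a*(4*a^4 - 4*a^3 - 40*a^2 + 91*a - 4))" unfolding a_def by (intro lo0_intros)
  have q1: "lo 2 ((a^2 - 30*a + 1) * b^2)"
    by (rule lo_mult'[OF p1 lo_bpow[of 2, unfolded b_def[symmetric]]]) simp
  have q2: "lo 2 (2*a*(3*a+1)*(4*a-7)*b)"
    by (rule lo_mult'[OF p2 lo_b[unfolded b_def[symmetric]]]) simp
  have q3: "lo 2 (a*(4*a^4 - 4*a^3 - 40*a^2 + 91*a - 4))"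
    by (rule lo_mono[OF p3]) simp
  have "lo (int 3 - 1) ((a^2 - 30*a + 1) * b^2 + 2*a*(3*a+1)*(4*a-7)*b
            - a*(4*a^4 - 4*a^3 - 40*a^2 + 91*a - 4))"
    using lo_diff[OF lo_add[OF q1 q2] q3] by simp
  from ap_pert[OF t this] have "ap (-4) 3 (dd a b)" unfolding eq .
  then show ?thesis by (simp only: a_def b_def)
qed


theorem mainTheorem6:
  fixes a b d :: Qab and P0 :: "Qab ecpoint"
  assumes "a = var_a" and "b = var_b" and "d = dd a b"
    and "P0 = Pt (-4 * d * b) (4 * d^2)"
  shows "on_curve (EA a b) (EB a b) (EC a b) P0
         \<and> (\<forall>n::nat. n \<ge> 1 \<longrightarrow> ec_mult (EA a b) (EB a b) (EC a b) n P0 \<noteq> Infinity)"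
proof
  have hd': "d = -4 * b^3 + (a^2 - 30*a + 1) * b^2 + 2*a*(3*a+1)*(4*a-7)*b
            - a*(4*a^4 - 4*a^3 - 40*a^2 + 91*a - 4)" using assms(3) by (simp add: dd_def)
  have rhs: "(-4 * d * b)^3 + EA a b * (-4 * d * b)^2 + EB a b * (-4 * d * b) + EC a b
       = 16 * d^3 * (-4 * b^3 + (a^2 - 30*a + 1) * b^2 + 2*a*(3*a+1)*(4*a-7)*b
            - a*(4*a^4 - 4*a^3 - 40*a^2 + 91*a - 4))"
    unfolding EA_def EB_def EC_def assms(3)[symmetric] by algebra
  show "on_curve (EA a b) (EB a b) (EC a b) P0"
    unfolding on_curve_def assms(4) ecpoint.case rhs hd'[symmetric] by algebra
next
  have hd: "ap (-4) 3 d" using d_ap assms by simp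
  have hx0: "ap 16 4 (-4 * d * b)"
    by (rule ap_mult'[OF ap_mult'[OF ap_neg_num hd] ap_b[folded assms(2)]]) simp_all
  have hy0: "ap 64 6 (4 * d^2)"
    by (rule ap_mult'[OF ap_num ap_sq[OF hd]]) simp_all
  have hdl: "lo 3 d" using ap_lo[OF hd] by simp
  have pa: "lo 0 (a^2 - 30*a + 1)" unfolding assms(1) by (intro lo0_intros)
  have hA: "lo 3 (EA a b)" unfolding EA_def assms(3)[symmetric]
    by (rule lo_mult'[OF hdl pa]) simp
  have eB: "EB a b = d^2 * (-8 * a * (3*a+1) * (4*a-7))"
    unfolding EB_def assms(3)[symmetric] by algebra
  have pb: "lo 0 (-8 * a * (3*a+1) * (4*a-7))" unfolding assms(1) by (intro lo0_intros)
  have hB: "lo 6 (EB a b)" unfolding eB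
    by (rule lo_mult'[OF lo_power[OF hdl, of 2] pb]) simp
  show "\<forall>n::nat. n \<ge> 1 \<longrightarrow> ec_mult (EA a b) (EB a b) (EC a b) n P0 \<noteq> Infinity"
  proof (intro allI impI)
    fix n :: nat assume "n \<ge> 1"
    from orbit[OF hx0 hy0 hA hB this, of "EC a b"] show "ec_mult (EA a b) (EB a b) (EC a b) n P0 \<noteq> Infinity"
      unfolding assms(4) by auto
  qed
qed

end
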